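(* In the setting described in the context, let $0<h<h_\circ$ and $j\in\{1,\dots,d\}$. Then there is a constant $C$, independent of $v$ and $h$, such that \[(\partial_{x_j}\mathbf H\Phi_v^h(x))^2\le C\,\mathbf H\Phi_v^h(x)\quad\text{for all }x\in B_{R_\circ-1}.\]
   Context: $\mathbf Hf(x)=|\det(\partial_i\partial_jf(x))_{i,j}|$. $B_r$ is the open ball of radius $r$ centered at $0$ in $\mathbb R^d$, $2\le d\le4$. Let $\phi:\mathbb R^d\to\mathbb R$ coincide on $[-1,1]^d$ with an analytic convex function of finite type defined on $[-2,2]^d$ and vanish outside $[-1,1]^d$; finite type means there are an integer $k\ge2$ and $m,M>0$ with $|\partial^\alpha\phi(x)|\le M$ for $|\alpha|\le 2k+5$ and $\sum_{j=2}^k\frac1{j!}|(u\cdot\nabla)^j\phi(x)|\ge m$ for all $x\in[-1,1]^d$ and unit vectors $u$. For $v\in\mathbb R^d$ with $-v\in\nabla\phi(B_{1/4})$, let $\omega_v\in B_{1/4}$ be the unique point with $\nabla\phi(\omega_v)=-v$ and $\Phi_v(x)=\phi(x+\omega_v)+v\cdot x-\phi(\omega_v)$. There is $c_\phi>0$ with $(c_\phi|x|)^k\le\Phi_v(x)$ on $B_{1/2}$ for all such $v$; fix $0<h_\circ\le(c_\phi/4)^k$. For $0<h<h_\circ$ let $\mathcal B_v^h=\{x\in B_{1/2}:\Phi_v(x)<h/2\}$, let $T_v^h$ be an invertible affine map of $\mathbb R^d$ with $B_1\subset(T_v^h)^{-1}\mathcal B_v^h\subset B_d$, and set $\Phi_v^h(x)=h^{-1}\Phi_v(T_v^hx)$.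 Standing assumption: $h_\circ$ is small enough that every $\Phi_v^h$ is defined, convex and of finite type on a ball $B_{R_\circ}$ with $R_\circ\ge100d$. *)

theory Defs
  imports "HOL-Analysis.Analysis"
begin

text \<open>Points of R^d are vectors real^'n with CARD('n) = d.\<close>

definition cube :: "real \<Rightarrow> (real^'n) set" where
  "cube r = {x. \<forall>i. \<bar>x $ i\<bar> \<le> r}"

definition partial :: "'n \<Rightarrow> (real^'n \<Rightarrow> real) \<Rightarrow> real^'n \<Rightarrow> real" where
  "partial i f x = deriv (\<lambda>t. f (x + t *\<^sub>R axis i 1)) 0"

text \<open>Iterated partial derivative; a list of indices of length n represents a multi-index of order n.\<close>
fun iter_partial :: "'n list \<Rightarrow> (real^'n \<Rightarrow> real) \<Rightarrow> real^'n \<Rightarrow> real" where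
  "iter_partial [] f = f"
| "iter_partial (i # is) f = partial i (iter_partial is f)"

definition udot_grad :: "real^'n \<Rightarrow> (real^'n \<Rightarrow> real) \<Rightarrow> real^'n \<Rightarrow> real" where
  "udot_grad u f = (\<lambda>x. \<Sum>i\<in>UNIV. u $ i * partial i f x)"

definition grad :: "(real^'n \<Rightarrow> real) \<Rightarrow> real^'n \<Rightarrow> real^'n" where
  "grad f x = (\<chi> i. partial i f x)"

definition finite_type_on :: "(real^'n) set \<Rightarrow> (real^'n \<Rightarrow> real) \<Rightarrow> nat \<Rightarrow> real \<Rightarrow> real \<Rightarrow> bool" where
  "finite_type_on S f k m M \<longleftrightarrow> 2 \<le> k \<and> m > 0 \<and> M > 0 \<and>
     (\<forall>x\<in>S. \<forall>is. length is \<le> 2 * k + 5 \<longrightarrow> \<bar>iter_partial is f x\<bar> \<le> M) \<and>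
     (\<forall>x\<in>S. \<forall>u. norm u = 1 \<longrightarrow>
        (\<Sum>j=2..k. \<bar>((udot_grad u) ^^ j) f x\<bar> / fact j) \<ge> m)"

definition real_analytic_at :: "(real^'n \<Rightarrow> real) \<Rightarrow> real^'n \<Rightarrow> bool" where
  "real_analytic_at f a \<longleftrightarrow> (\<exists>r>0. \<exists>c :: ('n \<Rightarrow> nat) \<Rightarrow> real.
     \<forall>x\<in>ball a r. ((\<lambda>\<alpha>. c \<alpha> * (\<Prod>i\<in>UNIV. (x $ i - a $ i) ^ \<alpha> i)) has_sum f x) UNIV)"

definition hessdet :: "(real^'n \<Rightarrow> real) \<Rightarrow> real^'n \<Rightarrow> real" where
  "hessdet f x = \<bar>det (\<chi> i j. partial i (partial j f) x)\<bar>"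

definition admissible :: "(real^'n \<Rightarrow> real) \<Rightarrow> real^'n \<Rightarrow> bool" where
  "admissible g v \<longleftrightarrow> (\<exists>w\<in>ball 0 (1/4). grad g w = - v)"

definition omega :: "(real^'n \<Rightarrow> real) \<Rightarrow> real^'n \<Rightarrow> real^'n" where
  "omega g v = (THE w. w \<in> ball 0 (1/4) \<and> grad g w = - v)"

definition Phi :: "(real^'n \<Rightarrow> real) \<Rightarrow> real^'n \<Rightarrow> real^'n \<Rightarrow> real" where
  "Phi g v x = g (x + omega g v) + v \<bullet> x - g (omega g v)"

definition sublevel :: "(real^'n \<Rightarrow> real) \<Rightarrow> real^'n \<Rightarrow> real \<Rightarrow> (real^'n) set" where
  "sublevel g v h = {x \<in> ball 0 (1/2). Phi g v x < h / 2}"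

definition invertible_affine :: "(real^'n \<Rightarrow> real^'n) \<Rightarrow> bool" where
  "invertible_affine T \<longleftrightarrow> (\<exists>A b. linear A \<and> bij A \<and> T = (\<lambda>x. A x + b))"

definition Phih :: "(real^'n \<Rightarrow> real) \<Rightarrow> real^'n \<Rightarrow> real \<Rightarrow> (real^'n \<Rightarrow> real^'n) \<Rightarrow> real^'n \<Rightarrow> real" where
  "Phih g v h T x = Phi g v (T x) / h"

end

theory Submission
  imports Defs
begin

definition dd :: "'a::real_normed_vector \<Rightarrow> ('a \<Rightarrow> real) \<Rightarrow> 'a \<Rightarrow> real" where
  "dd u f x = deriv (\<lambda>t. f (x + t *\<^sub>R u)) 0"

coinductive smooth_on :: "'a::real_normed_vector set \<Rightarrow> ('a \<Rightarrow> real) \<Rightarrow> bool" for S where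
  smooth_onI: "(\<And>y. y \<in> S \<Longrightarrow> f differentiable (at y)) \<Longrightarrow> (\<And>u. smooth_on S (dd u f)) \<Longrightarrow> smooth_on S f"

lemma smooth_on_coind:
  assumes "X f"
    and "\<And>f. X f \<Longrightarrow> (\<forall>y\<in>S. f differentiable (at y)) \<and> (\<forall>u. X (dd u f) \<or> smooth_on S (dd u f))"
  shows "smooth_on S f"
  using assms(1)
proof (coinduction arbitrary: f rule: smooth_on.coinduct)
  case (smooth_on f)
  then show ?case using assms(2)[of f] by blast
qed

lemma line_has_derivative:
  assumes "(f has_derivative D) (at (x + t *\<^sub>R u))"
  shows "((\<lambda>s. f (x + s *\<^sub>R u)) has_real_derivative D u) (at t)"
proof -
  have l: "linear D" using assms has_derivative_linear by blast
  have "((\<lambda>s. x + s *\<^sub>R u) has_derivative (\<lambda>s. s *\<^sub>R u)) (at t)"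
    by (auto intro!: derivative_eq_intros)
  from has_derivative_compose[OF this assms]
  have "((\<lambda>s. f (x + s *\<^sub>R u)) has_derivative (\<lambda>s. D (s *\<^sub>R u))) (at t)" by (simp add: o_def)
  moreover have "(\<lambda>s. D (s *\<^sub>R u)) = (*) (D u)"
    using l by (auto simp: linear_scale)
  ultimately show ?thesis
    by (simp add: has_field_derivative_def)
qed

lemma dd_has_derivative:
  assumes "(f has_derivative D) (at y)"
  shows "dd u f y = D u"
proof -
  have "((\<lambda>s. f (y + s *\<^sub>R u)) has_real_derivative D u) (at 0)"
    using line_has_derivative[of f D y 0 u] assms by simp
  then show ?thesis unfolding dd_def by (rule DERIV_imp_deriv)
qed

lemma smooth_on_differentiable:
  "smooth_on S f \<Longrightarrow> y \<in> S \<Longrightarrow> f differentiable (at y)"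
  by (erule smooth_on.cases) auto

lemma smooth_on_dd: "smooth_on S f \<Longrightarrow> smooth_on S (dd u f)"
  by (erule smooth_on.cases) auto

lemma smooth_on_has_derivative:
  assumes "smooth_on S f" "y \<in> S"
  shows "(f has_derivative (\<lambda>u. dd u f y)) (at y)"
proof -
  obtain D where D: "(f has_derivative D) (at y)"
    using smooth_on_differentiable[OF assms] by (auto simp: differentiable_def)
  moreover have "D = (\<lambda>u. dd u f y)" using dd_has_derivative[OF D] by auto
  ultimately show ?thesis by simp
qed

lemma smooth_on_line:
  assumes "smooth_on S f" "x + t *\<^sub>R u \<in> S"
  shows "((\<lambda>s. f (x + s *\<^sub>R u)) has_real_derivative dd u f (x + t *\<^sub>R u)) (at t)"
  using line_has_derivative[OF smooth_on_has_derivative[OF assms]] .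

lemma smooth_on_linear_dd:
  assumes "smooth_on S f" "y \<in> S"
  shows "linear (\<lambda>u. dd u f y)"
  using smooth_on_has_derivative[OF assms] has_derivative_linear by blast

lemma smooth_on_mono: "smooth_on S f \<Longrightarrow> T \<subseteq> S \<Longrightarrow> smooth_on T f"
  by (rule smooth_on_coind[of "\<lambda>f. smooth_on S f"])
     (auto intro: smooth_on_differentiable smooth_on_dd)

lemma smooth_on_local:
  assumes "\<forall>y\<in>S. \<exists>N. open N \<and> y \<in> N \<and> smooth_on N f"
  shows "smooth_on S f"
proof (rule smooth_on_coind[of "\<lambda>f. \<forall>y\<in>S. \<exists>N. open N \<and> y \<in> N \<and> smooth_on N f"])
  show "\<forall>y\<in>S. \<exists>N. open N \<and> y \<in> N \<and> smooth_on N f" by fact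
next
  fix f assume a: "\<forall>y\<in>S. \<exists>N. open N \<and> y \<in> N \<and> smooth_on N f"
  show "(\<forall>y\<in>S. f differentiable (at y)) \<and>
        (\<forall>u. (\<forall>y\<in>S. \<exists>N. open N \<and> y \<in> N \<and> smooth_on N (dd u f)) \<or> smooth_on S (dd u f))"
    using a by (meson smooth_on_dd smooth_on_differentiable)
qed

lemma dd_cong:
  assumes "open S" "y \<in> S" "\<And>z. z \<in> S \<Longrightarrow> f z = g z"
  shows "dd u f y = dd u g y"
proof -
  have "eventually (\<lambda>t. y + t *\<^sub>R u \<in> S) (nhds 0)"
  proof -
    have "open ((\<lambda>t::real. y + t *\<^sub>R u) -` S)"
      by (rule open_vimage[OF assms(1)]) (intro continuous_intros)
    then show ?thesis using assms(2) eventually_nhds_in_open[of "(\<lambda>t::real. y + t *\<^sub>R u) -` S" 0]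
      by simp
  qed
  then have "eventually (\<lambda>t. f (y + t *\<^sub>R u) = g (y + t *\<^sub>R u)) (nhds 0)"
    by eventually_elim (use assms in auto)
  then show ?thesis unfolding dd_def by (intro deriv_cong_ev) auto
qed

lemma smooth_on_cong:
  assumes "smooth_on S f" "open S" "\<And>z. z \<in> S \<Longrightarrow> f z = g z"
  shows "smooth_on S g"
proof (rule smooth_on_coind[of "\<lambda>g. \<exists>f. smooth_on S f \<and> (\<forall>z\<in>S. f z = g z)"])
  show "\<exists>f. smooth_on S f \<and> (\<forall>z\<in>S. f z = g z)" using assms by blast
next
  fix g assume "\<exists>f. smooth_on S f \<and> (\<forall>z\<in>S. f z = g z)"
  then obtain f where f: "smooth_on S f" "\<forall>z\<in>S. f z = g z" by blast
  have gd: "(g has_derivative (\<lambda>u. dd u f y)) (at y)" if "y \<in> S" for y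
    by (rule has_derivative_transform_within_open[OF smooth_on_has_derivative[OF f(1) that] assms(2) that])
       (use f in auto)
  show "(\<forall>y\<in>S. g differentiable (at y)) \<and>
        (\<forall>u. (\<exists>f. smooth_on S f \<and> (\<forall>z\<in>S. f z = dd u g z)) \<or> smooth_on S (dd u g))"
  proof (intro conjI allI ballI disjI1)
    show "g differentiable at y" if "y \<in> S" for y using gd[OF that] by (auto simp: differentiable_def)
    fix u
    show "\<exists>f'. smooth_on S f' \<and> (\<forall>z\<in>S. f' z = dd u g z)"
    proof (rule exI[of _ "dd u f"], intro conjI ballI)
      show "smooth_on S (dd u f)" using f smooth_on_dd by blast
      fix z assume "z \<in> S"
      show "dd u f z = dd u g z" using dd_has_derivative[OF gd[OF \<open>z \<in> S\<close>]] by simp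
    qed
  qed
qed


lemma smooth_on_affine:
  fixes A :: "'a::euclidean_space \<Rightarrow> 'b::euclidean_space" and l :: "'a \<Rightarrow> real"
  assumes K: "smooth_on U K" and A: "linear A" and l: "linear l" and S: "open S"
    and AS: "\<And>y. y \<in> S \<Longrightarrow> A y + b \<in> U"
  shows "smooth_on S (\<lambda>y. c * K (A y + b) + l y + e)"
proof (rule smooth_on_coind[of "\<lambda>G. \<exists>K c l e. smooth_on U K \<and> linear l \<and>
           (\<forall>y\<in>S. G y = c * K (A y + b) + l y + e)"])
  show "\<exists>K' c' l' e'. smooth_on U K' \<and> linear l' \<and> (\<forall>y\<in>S. c * K (A y + b) + l y + e = c' * K' (A y + b) + l' y + e')"
    using K l by blast
next
  fix G assume "\<exists>K c l e. smooth_on U K \<and> linear l \<and> (\<forall>y\<in>S. G y = c * K (A y + b) + l y + e)"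
  then obtain K c l e where K: "smooth_on U K" and l: "linear l"
    and G: "\<And>y. y \<in> S \<Longrightarrow> G y = c * K (A y + b) + l y + e" by blast
  have bA: "bounded_linear A" using A linear_conv_bounded_linear by blast
  have bl: "bounded_linear l" using l linear_conv_bounded_linear by blast
  have Gd: "(G has_derivative (\<lambda>h. c * dd (A h) K (A y + b) + l h)) (at y)" if y: "y \<in> S" for y
  proof -
    have d1: "((\<lambda>y. A y + b) has_derivative A) (at y)"
      using bA by (auto intro!: derivative_eq_intros bounded_linear_imp_has_derivative)
    have d2: "(K has_derivative (\<lambda>u. dd u K (A y + b))) (at (A y + b))"
      by (rule smooth_on_has_derivative[OF K AS[OF y]])
    have d3: "((\<lambda>y. K (A y + b)) has_derivative (\<lambda>h. dd (A h) K (A y + b))) (at y)"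
      using has_derivative_compose[OF d1 d2] by (simp add: o_def)
    have d4: "((\<lambda>y. c * K (A y + b) + l y + e) has_derivative (\<lambda>h. c * dd (A h) K (A y + b) + l h)) (at y)"
      using d3 bl by (auto intro!: derivative_eq_intros bounded_linear_imp_has_derivative)
    show ?thesis
      by (rule has_derivative_transform_within_open[OF d4 S y]) (use G in auto)
  qed
  show "(\<forall>y\<in>S. G differentiable (at y)) \<and>
        (\<forall>u. (\<exists>K c l e. smooth_on U K \<and> linear l \<and> (\<forall>y\<in>S. dd u G y = c * K (A y + b) + l y + e))
          \<or> smooth_on S (dd u G))"
  proof (intro conjI allI ballI disjI1)
    show "G differentiable (at y)" if "y \<in> S" for y using Gd[OF that] by (auto simp: differentiable_def)
    fix u
    show "\<exists>K c l e. smooth_on U K \<and> linear l \<and> (\<forall>y\<in>S. dd u G y = c * K (A y + b) + l y + e)"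
    proof (intro exI conjI ballI)
      show "smooth_on U (dd (A u) K)" using K by (rule smooth_on_dd)
      show "linear (\<lambda>y::'a. 0::real)" by (simp add: linear_zero)
      fix y assume "y \<in> S"
      show "dd u G y = c * dd (A u) K (A y + b) + 0 + l u"
        using dd_has_derivative[OF Gd[OF \<open>y \<in> S\<close>]] by simp
    qed
  qed
qed


definition mnm :: "real^'n \<Rightarrow> ('n \<Rightarrow> nat) \<Rightarrow> real^'n \<Rightarrow> real" where
  "mnm a \<alpha> x = (\<Prod>i\<in>UNIV. (x$i - a$i) ^ \<alpha> i)"

definition dmono :: "'n \<Rightarrow> real^'n \<Rightarrow> ('n \<Rightarrow> nat) \<Rightarrow> real^'n \<Rightarrow> real" where
  "dmono i a \<alpha> x = of_nat (\<alpha> i) * (x$i - a$i) ^ (\<alpha> i - 1) * (\<Prod>l\<in>UNIV-{i}. (x$l - a$l) ^ \<alpha> l)"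

definition Pc :: "real^'n \<Rightarrow> real \<Rightarrow> (real^'n) set" where
  "Pc a r = {x. \<forall>i. \<bar>x$i - a$i\<bar> < r}"

definition deg :: "('n::finite \<Rightarrow> nat) \<Rightarrow> nat" where
  "deg \<alpha> = (\<Sum>i\<in>UNIV. \<alpha> i)"

lemma open_Pc: "open (Pc a r)"
proof -
  have "Pc a r = (\<Inter>i\<in>UNIV. (\<lambda>x. \<bar>x$i - a$i\<bar>) -` {..<r})" by (auto simp: Pc_def)
  also have "open \<dots>"
    by (intro open_INT ballI open_vimage open_lessThan) (auto intro!: continuous_intros)
  finally show ?thesis .
qed

lemma convex_Pc: "convex (Pc (a::real^'n) r)"
  unfolding convex_def Pc_def
proof (clarsimp)
  fix x y :: "real^'n" and u v :: real and i
  assume x: "\<forall>i. \<bar>x $ i - a $ i\<bar> < r" and y: "\<forall>i. \<bar>y $ i - a $ i\<bar> < r"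
    and uv: "0 \<le> u" "0 \<le> v" "u + v = 1"
  have "u * x $ i + v * y $ i - a $ i = u * (x$i - a$i) + v * (y$i - a$i)"
    using uv by (simp add: algebra_simps) (metis add.commute mult.commute mult_1 uv(3) distrib_left)
  also have "\<bar>\<dots>\<bar> \<le> u * \<bar>x$i - a$i\<bar> + v * \<bar>y$i - a$i\<bar>"
    using uv by (simp add: abs_triangle_ineq[THEN order_trans] abs_mult)
  also have "\<dots> < r"
  proof (cases "u = 0")
    case True then show ?thesis using uv y by auto
  next
    case False
    then have "u * \<bar>x$i - a$i\<bar> < u * r" using x uv by (intro mult_strict_left_mono) auto
    moreover have "v * \<bar>y$i - a$i\<bar> \<le> v * r" using y uv by (intro mult_left_mono) (auto intro: less_imp_le)
    ultimately show ?thesis using uv by (simp add: algebra_simps) (metis add_less_le_mono distrib_right mult_1 uv(3) mult.commute)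
  qed
  finally show "\<bar>u * x $ i + v * y $ i - a $ i\<bar> < r" .
qed

lemma center_Pc: "r > 0 \<Longrightarrow> a \<in> Pc a r"
  by (simp add: Pc_def)

lemma Pc_mono: "r \<le> s \<Longrightarrow> Pc a r \<subseteq> Pc a s"
  by (auto simp: Pc_def intro: less_le_trans)

lemma abs_mono_le:
  assumes "z \<in> Pc a s"
  shows "\<bar>mnm a \<alpha> z\<bar> \<le> s ^ deg \<alpha>"
proof -
  have "\<bar>mnm a \<alpha> z\<bar> = (\<Prod>i\<in>UNIV. \<bar>z$i - a$i\<bar> ^ \<alpha> i)"
    by (simp add: mnm_def abs_prod power_abs)
  also have "\<dots> \<le> (\<Prod>i\<in>UNIV. s ^ \<alpha> i)"
    using assms by (intro prod_mono conjI zero_le_power power_mono abs_ge_zero) (auto simp: Pc_def less_imp_le)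
  also have "\<dots> = s ^ deg \<alpha>" by (simp add: deg_def power_sum)
  finally show ?thesis .
qed

lemma mono_corner: "mnm (a::real^'n) \<alpha> (\<chi> i. a$i + s) = s ^ deg \<alpha>"
  by (simp add: mnm_def deg_def power_sum)

lemma abs_dmono_le:
  assumes "z \<in> Pc a s"
  shows "\<bar>dmono i a \<alpha> z\<bar> \<le> real (deg \<alpha>) * s ^ (deg \<alpha> - 1)"
proof -
  have s0: "0 \<le> s" using assms by (auto simp: Pc_def)
  show ?thesis
  proof (cases "\<alpha> i = 0")
  case True
  then show ?thesis using s0 by (simp add: dmono_def)
next
  case False
  have degs: "deg \<alpha> = \<alpha> i + (\<Sum>l\<in>UNIV-{i}. \<alpha> l)"
    by (simp add: deg_def sum.remove)
  have "\<bar>dmono i a \<alpha> z\<bar> = real (\<alpha> i) * \<bar>z$i - a$i\<bar> ^ (\<alpha> i - 1) * (\<Prod>l\<in>UNIV-{i}. \<bar>z$l - a$l\<bar> ^ \<alpha> l)"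
    by (simp add: dmono_def abs_mult abs_prod power_abs)
  also have "\<dots> \<le> real (deg \<alpha>) * s ^ (\<alpha> i - 1) * (\<Prod>l\<in>UNIV-{i}. s ^ \<alpha> l)"
  proof -
    have A1: "real (\<alpha> i) \<le> real (deg \<alpha>)" using degs by (simp add: sum_nonneg)
    have A2: "\<bar>z$i - a$i\<bar> ^ (\<alpha> i - 1) \<le> s ^ (\<alpha> i - 1)"
      using assms by (intro power_mono) (auto simp: Pc_def less_imp_le)
    have A3: "(\<Prod>l\<in>UNIV-{i}. \<bar>z$l - a$l\<bar> ^ \<alpha> l) \<le> (\<Prod>l\<in>UNIV-{i}. s ^ \<alpha> l)"
      using assms by (intro prod_mono conjI zero_le_power power_mono abs_ge_zero) (auto simp: Pc_def less_imp_le)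
    show ?thesis
      using A1 A2 A3 s0 by (intro mult_mono) (auto intro!: prod_nonneg)
  qed
  also have "\<dots> = real (deg \<alpha>) * s ^ (deg \<alpha> - 1)"
    using False by (simp add: degs power_sum[symmetric] power_add[symmetric])
  finally show ?thesis .
qed
qed

lemma n_pow_bound:
  fixes s s' :: real
  assumes "0 < s'" "s' < s"
  shows "\<exists>K\<ge>0. \<forall>n. real n * s' ^ (n - 1) \<le> K * s ^ n"
proof -
  have q: "norm (s'/s) < 1" using assms by auto
  have "(\<lambda>n. of_nat n * (s'/s) ^ n) \<longlonglongrightarrow> 0" by (rule powser_times_n_limit_0[OF q])
  then have "bounded (range (\<lambda>n. real n * (s'/s) ^ n))"
    using convergent_imp_bounded[of "\<lambda>n. real n * (s'/s) ^ n"] by (auto simp: convergent_def)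
  then obtain Q where Q: "\<And>n. \<bar>real n * (s'/s) ^ n\<bar> \<le> Q"
    by (auto simp: bounded_iff)
  have "Q \<ge> 0" using Q[of 0] by simp
  show ?thesis
  proof (intro exI[of _ "Q / s'"] conjI allI)
    show "Q / s' \<ge> 0" using \<open>Q \<ge> 0\<close> assms by simp
    fix n
    show "real n * s' ^ (n - 1) \<le> Q / s' * s ^ n"
    proof (cases n)
      case 0 then show ?thesis using \<open>Q \<ge> 0\<close> assms by simp
    next
      case (Suc m)
      have "real n * s' ^ (n - 1) = real n * (s'/s) ^ n * s ^ n / s'"
        using assms Suc by (simp add: power_divide field_simps)
      also have "\<dots> \<le> Q * s ^ n / s'"
        using Q[of n] assms by (intro divide_right_mono mult_right_mono) auto
      finally show ?thesis by simp
    qed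
  qed
qed


lemma comp_has_derivative0:
  "((\<lambda>x::real^'n. (x$i - a$i) ^ n) has_derivative (\<lambda>h. real n * (x$i - a$i) ^ (n - 1) * h$i)) (at x)"
proof -
  have "((\<lambda>x::real^'n. x$i) has_derivative (\<lambda>h. h$i)) (at x)"
    by (rule bounded_linear_imp_has_derivative) (rule bounded_linear_vec_nth)
  then show ?thesis
    by (auto intro!: derivative_eq_intros simp: mult_ac)
qed

lemma mnm_has_derivative:
  "((\<lambda>x. c * mnm a \<alpha> x) has_derivative (\<lambda>h. \<Sum>i\<in>UNIV. h$i * (c * dmono i a \<alpha> x))) (at x)"
proof -
  have "((\<lambda>x. \<Prod>i\<in>UNIV. (x$i - a$i) ^ \<alpha> i) has_derivative
     (\<lambda>h. \<Sum>i\<in>UNIV. (real (\<alpha> i) * (x$i - a$i) ^ (\<alpha> i - 1) * h$i) * (\<Prod>j\<in>UNIV - {i}. (x$j - a$j) ^ \<alpha> j))) (at x)"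
    by (rule has_derivative_prod) (rule comp_has_derivative0)
  then have "((\<lambda>x. c * mnm a \<alpha> x) has_derivative
     (\<lambda>h. c * (\<Sum>i\<in>UNIV. (real (\<alpha> i) * (x$i - a$i) ^ (\<alpha> i - 1) * h$i) * (\<Prod>j\<in>UNIV - {i}. (x$j - a$j) ^ \<alpha> j)))) (at x)"
    unfolding mnm_def by (rule has_derivative_mult_right)
  moreover have "(\<lambda>h. c * (\<Sum>i\<in>UNIV. (real (\<alpha> i) * (x$i - a$i) ^ (\<alpha> i - 1) * h$i) * (\<Prod>j\<in>UNIV - {i}. (x$j - a$j) ^ \<alpha> j)))
     = (\<lambda>h. \<Sum>i\<in>UNIV. h$i * (c * dmono i a \<alpha> x))"
    by (auto simp: dmono_def sum_distrib_left mult_ac)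
  ultimately show ?thesis by simp
qed

definition enum_ms :: "nat \<Rightarrow> ('n::finite \<Rightarrow> nat)" where
  "enum_ms = from_nat_into UNIV"

lemma bij_enum_ms: "bij_betw (enum_ms :: nat \<Rightarrow> ('n::finite \<Rightarrow> nat)) UNIV UNIV"
proof -
  have inj: "inj (\<lambda>k::nat. (\<lambda>_::'n. k))" by (auto simp: inj_def fun_eq_iff)
  have "infinite (range (\<lambda>k::nat. (\<lambda>_::'n. k)))"
  proof
    assume "finite (range (\<lambda>k::nat. (\<lambda>_::'n. k)))"
    then have "finite (UNIV::nat set)" by (rule finite_imageD) (use inj in simp)
    then show False by simp
  qed
  then have inf: "infinite (UNIV :: ('n \<Rightarrow> nat) set)" using infinite_super[OF subset_UNIV] by auto
  show ?thesis unfolding enum_ms_def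
    by (rule bij_betw_from_nat_into[OF countableI_type inf])
qed

lemma enum_sums:
  fixes \<phi> :: "('n::finite \<Rightarrow> nat) \<Rightarrow> real"
  assumes "\<phi> summable_on UNIV"
  shows "(\<lambda>k. \<phi> (enum_ms k)) sums (\<Sum>\<^sub>\<infinity>\<alpha>. \<phi> \<alpha>)"
proof -
  have "(\<phi> has_sum (\<Sum>\<^sub>\<infinity>\<alpha>. \<phi> \<alpha>)) UNIV" using assms by simp
  then have "((\<lambda>k. \<phi> (enum_ms k)) has_sum (\<Sum>\<^sub>\<infinity>\<alpha>. \<phi> \<alpha>)) UNIV"
    by (subst has_sum_reindex_bij_betw[OF bij_enum_ms])
  then show ?thesis by (rule has_sum_imp_sums)
qed

lemma dmono_summable:
  fixes c :: "('n::finite \<Rightarrow> nat) \<Rightarrow> real" and a :: "real^'n"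
  assumes hs: "\<And>x. x \<in> Pc a \<rho> \<Longrightarrow> (\<lambda>\<alpha>. c \<alpha> * mnm a \<alpha> x) summable_on UNIV"
    and s: "0 < s'" "s' < s" "s < \<rho>"
  shows "\<exists>M. (\<forall>\<alpha>. M \<alpha> \<ge> 0) \<and> M summable_on UNIV \<and>
     (\<forall>\<alpha> i. \<forall>z\<in>Pc a s'. \<bar>c \<alpha> * dmono i a \<alpha> z\<bar> \<le> M \<alpha>)"
proof -
  have "(\<chi> i. a$i + s) \<in> Pc a \<rho>" using s by (auto simp: Pc_def)
  from hs[OF this] have "(\<lambda>\<alpha>. c \<alpha> * s ^ deg \<alpha>) summable_on UNIV" by (simp add: mono_corner)
  then have "(\<lambda>\<alpha>. norm (c \<alpha> * s ^ deg \<alpha>)) summable_on UNIV"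
    by (rule summable_on_iff_abs_summable_on_real[THEN iffD1])
  then have "(\<lambda>\<alpha>. \<bar>c \<alpha> * s ^ deg \<alpha>\<bar>) summable_on UNIV"
    by (simp only: real_norm_def)
  then have sm: "(\<lambda>\<alpha>. \<bar>c \<alpha>\<bar> * s ^ deg \<alpha>) summable_on UNIV"
    using s by (simp add: abs_mult)
  obtain K where K: "K \<ge> 0" "\<And>n. real n * s' ^ (n - 1) \<le> K * s ^ n"
    using n_pow_bound[OF s(1,2)] by blast
  show ?thesis
  proof (intro exI[of _ "\<lambda>\<alpha>. K * (\<bar>c \<alpha>\<bar> * s ^ deg \<alpha>)"] conjI allI ballI)
    show "0 \<le> K * (\<bar>c \<alpha>\<bar> * s ^ deg \<alpha>)" for \<alpha> using K(1) s by simp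
    show "(\<lambda>\<alpha>. K * (\<bar>c \<alpha>\<bar> * s ^ deg \<alpha>)) summable_on UNIV"
      using sm by (rule summable_on_cmult_right)
    fix \<alpha> i z assume z: "z \<in> Pc a s'"
    have "\<bar>c \<alpha> * dmono i a \<alpha> z\<bar> = \<bar>c \<alpha>\<bar> * \<bar>dmono i a \<alpha> z\<bar>" by (simp add: abs_mult)
    also have "\<dots> \<le> \<bar>c \<alpha>\<bar> * (real (deg \<alpha>) * s' ^ (deg \<alpha> - 1))"
      by (intro mult_left_mono abs_dmono_le z) simp
    also have "\<dots> \<le> \<bar>c \<alpha>\<bar> * (K * s ^ deg \<alpha>)"
      by (intro mult_left_mono K) simp
    finally show "\<bar>c \<alpha> * dmono i a \<alpha> z\<bar> \<le> K * (\<bar>c \<alpha>\<bar> * s ^ deg \<alpha>)" by (simp add: mult_ac)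
  qed
qed


lemma summable_by_bound:
  fixes f :: "'a \<Rightarrow> real"
  assumes "M summable_on A" "\<And>x. M x \<ge> 0" "\<And>x. x \<in> A \<Longrightarrow> \<bar>f x\<bar> \<le> M x"
  shows "f summable_on A"
proof -
  have "(\<lambda>x. norm (M x)) summable_on A" using assms(1,2) by (simp add: real_norm_def)
  then have "(\<lambda>x. norm (f x)) summable_on A"
    by (rule Infinite_Sum.abs_summable_on_comparison_test) (use assms(2,3) in auto)
  then show ?thesis by (rule summable_on_iff_abs_summable_on_real[THEN iffD2])
qed

lemma powser_has_derivative:
  fixes c :: "('n::finite \<Rightarrow> nat) \<Rightarrow> real" and a :: "real^'n"
  assumes hs: "\<And>x. x \<in> Pc a \<rho> \<Longrightarrow> (\<lambda>\<alpha>. c \<alpha> * mnm a \<alpha> x) summable_on UNIV"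
    and x: "x \<in> Pc a \<rho>"
  shows "(\<lambda>\<alpha>. c \<alpha> * dmono i a \<alpha> x) summable_on UNIV"
    and "((\<lambda>x. \<Sum>\<^sub>\<infinity>\<alpha>. c \<alpha> * mnm a \<alpha> x) has_derivative
          (\<lambda>h. \<Sum>i\<in>UNIV. h$i * (\<Sum>\<^sub>\<infinity>\<alpha>. c \<alpha> * dmono i a \<alpha> x))) (at x)"
proof -
  define r where "r = Max ((\<lambda>i. \<bar>x$i - a$i\<bar>) ` UNIV)"
  have rge: "\<And>i. \<bar>x$i - a$i\<bar> \<le> r" unfolding r_def by (intro Max_ge) auto
  have "r \<in> (\<lambda>i. \<bar>x$i - a$i\<bar>) ` UNIV" unfolding r_def by (intro Max_in) auto
  then have rlt: "r < \<rho>" using x by (auto simp: Pc_def)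
  have r0: "0 \<le> r" using rge[of undefined] by linarith
  define s' where "s' = (2 * r + \<rho>) / 3"
  define s where "s = (r + 2 * \<rho>) / 3"
  have ss: "0 < s'" "s' < s" "s < \<rho>" "r < s'" using rlt r0 by (auto simp: s'_def s_def)
  define S where "S = Pc a s'"
  have xS: "x \<in> S" using rge ss by (auto simp: S_def Pc_def intro: le_less_trans)
  have SP: "S \<subseteq> Pc a \<rho>" unfolding S_def using ss by (intro Pc_mono) auto
  obtain M where M: "\<And>\<alpha>. M \<alpha> \<ge> 0" "M summable_on UNIV"
    "\<And>\<alpha> i z. z \<in> S \<Longrightarrow> \<bar>c \<alpha> * dmono i a \<alpha> z\<bar> \<le> M \<alpha>"
    using dmono_summable[OF hs ss(1-3)] unfolding S_def by blast
  define Gi where "Gi i z = (\<Sum>\<^sub>\<infinity>\<alpha>. c \<alpha> * dmono i a \<alpha> z)" for i z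
  have sumGi: "(\<lambda>\<alpha>. c \<alpha> * dmono i a \<alpha> z) summable_on UNIV" if "z \<in> S" for i z
    by (rule summable_by_bound[OF M(2) M(1)]) (use M(3) that in auto)
  then show "(\<lambda>\<alpha>. c \<alpha> * dmono i a \<alpha> x) summable_on UNIV" using xS by blast
  have sums: "(\<lambda>k. c (enum_ms k) * dmono i a (enum_ms k) z) sums Gi i z" if "z \<in> S" for i z
    unfolding Gi_def by (rule enum_sums[OF sumGi[OF that]])
  have summM: "summable (\<lambda>k. M (enum_ms k))"
    using enum_sums[OF M(2)] sums_summable by blast
  have ul: "uniform_limit S (\<lambda>n z. \<Sum>k<n. c (enum_ms k) * dmono i a (enum_ms k) z) (Gi i) sequentially" for i
  proof -
    have "uniform_limit S (\<lambda>n z. \<Sum>k<n. c (enum_ms k) * dmono i a (enum_ms k) z)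
        (\<lambda>z. suminf (\<lambda>k. c (enum_ms k) * dmono i a (enum_ms k) z)) sequentially"
      by (rule Weierstrass_m_test[OF _ summM]) (use M(3) in auto)
    moreover have "suminf (\<lambda>k. c (enum_ms k) * dmono i a (enum_ms k) z) = Gi i z" if "z \<in> S" for z
      using sums[OF that] by (simp add: sums_iff)
    ultimately show ?thesis
      by (subst uniform_limit_cong[where g = "\<lambda>n z. \<Sum>k<n. c (enum_ms k) * dmono i a (enum_ms k) z"
            and i = "\<lambda>z. suminf (\<lambda>k. c (enum_ms k) * dmono i a (enum_ms k) z)"]) auto
  qed
  have "\<exists>g. \<forall>z\<in>S. (\<lambda>k. c (enum_ms k) * mnm a (enum_ms k) z) sums (g z) \<and>
      (g has_derivative (\<lambda>h. \<Sum>i\<in>UNIV. h$i * Gi i z)) (at z within S)"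
  proof (rule has_derivative_series[where f' = "\<lambda>k z h. \<Sum>i\<in>UNIV. h$i * (c (enum_ms k) * dmono i a (enum_ms k) z)"])
    show "convex S" unfolding S_def by (rule convex_Pc)
    show "((\<lambda>z. c (enum_ms k) * mnm a (enum_ms k) z) has_derivative
           (\<lambda>h. \<Sum>i\<in>UNIV. h$i * (c (enum_ms k) * dmono i a (enum_ms k) z))) (at z within S)" for k z
      by (rule has_derivative_at_withinI) (rule mnm_has_derivative)
    show "x \<in> S" by fact
    show "(\<lambda>k. c (enum_ms k) * mnm a (enum_ms k) x) sums (\<Sum>\<^sub>\<infinity>\<alpha>. c \<alpha> * mnm a \<alpha> x)"
      by (rule enum_sums[OF hs[OF \<open>x \<in> Pc a \<rho>\<close>]])
    fix e :: real assume e: "e > 0"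
    define e' where "e' = e / real CARD('n)"
    have e': "e' > 0" using e by (simp add: e'_def)
    have "\<forall>\<^sub>F n in sequentially. \<forall>i. \<forall>z\<in>S. dist (\<Sum>k<n. c (enum_ms k) * dmono i a (enum_ms k) z) (Gi i z) < e'"
      by (rule eventually_all_finite) (rule uniform_limitD[OF ul e'])
    then show "\<forall>\<^sub>F n in sequentially. \<forall>z\<in>S. \<forall>h. norm ((\<Sum>k<n. \<Sum>i\<in>UNIV. h$i * (c (enum_ms k) * dmono i a (enum_ms k) z))
           - (\<Sum>i\<in>UNIV. h$i * Gi i z)) \<le> e * norm h"
    proof eventually_elim
      case (elim n)
      show ?case
      proof (intro ballI allI)
        fix z h assume z: "z \<in> S"
        have "(\<Sum>k<n. \<Sum>i\<in>UNIV. h$i * (c (enum_ms k) * dmono i a (enum_ms k) z)) - (\<Sum>i\<in>UNIV. h$i * Gi i z)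
            = (\<Sum>i\<in>UNIV. h$i * ((\<Sum>k<n. c (enum_ms k) * dmono i a (enum_ms k) z) - Gi i z))"
          by (simp add: sum.swap[of _ "{..<n}"] sum_distrib_left right_diff_distrib sum_subtractf)
        also have "norm \<dots> \<le> (\<Sum>i\<in>(UNIV::'n set). norm h * e')"
        proof -
          have "norm (\<Sum>i\<in>UNIV. h$i * ((\<Sum>k<n. c (enum_ms k) * dmono i a (enum_ms k) z) - Gi i z))
              \<le> (\<Sum>i\<in>UNIV. norm (h$i * ((\<Sum>k<n. c (enum_ms k) * dmono i a (enum_ms k) z) - Gi i z)))"
            by (rule norm_sum)
          also have "\<dots> \<le> (\<Sum>i\<in>(UNIV::'n set). norm h * e')"
          proof (rule sum_mono)
            fix i
            have d: "\<bar>(\<Sum>k<n. c (enum_ms k) * dmono i a (enum_ms k) z) - Gi i z\<bar> \<le> e'"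
              using elim z by (auto simp: dist_real_def intro: less_imp_le)
            have "norm (h$i * ((\<Sum>k<n. c (enum_ms k) * dmono i a (enum_ms k) z) - Gi i z))
               = \<bar>h$i\<bar> * \<bar>(\<Sum>k<n. c (enum_ms k) * dmono i a (enum_ms k) z) - Gi i z\<bar>"
              by (simp add: abs_mult)
            also have "\<dots> \<le> norm h * e'"
              using d by (intro mult_mono) (auto simp: component_le_norm_cart)
            finally show "norm (h$i * ((\<Sum>k<n. c (enum_ms k) * dmono i a (enum_ms k) z) - Gi i z)) \<le> norm h * e'" .
          qed
          finally show ?thesis .
        qed
        also have "\<dots> = e * norm h" by (simp add: e'_def)
        finally show "norm ((\<Sum>k<n. \<Sum>i\<in>UNIV. h$i * (c (enum_ms k) * dmono i a (enum_ms k) z))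
           - (\<Sum>i\<in>UNIV. h$i * Gi i z)) \<le> e * norm h" .
      qed
    qed
  qed
  then obtain g where g: "\<And>z. z \<in> S \<Longrightarrow> (\<lambda>k. c (enum_ms k) * mnm a (enum_ms k) z) sums (g z)"
      "\<And>z. z \<in> S \<Longrightarrow> (g has_derivative (\<lambda>h. \<Sum>i\<in>UNIV. h$i * Gi i z)) (at z within S)"
    by blast
  have gG: "g z = (\<Sum>\<^sub>\<infinity>\<alpha>. c \<alpha> * mnm a \<alpha> z)" if "z \<in> S" for z
  proof -
    have "(\<lambda>k. c (enum_ms k) * mnm a (enum_ms k) z) sums (\<Sum>\<^sub>\<infinity>\<alpha>. c \<alpha> * mnm a \<alpha> z)"
      by (rule enum_sums[OF hs]) (use SP that in auto)
    then show ?thesis using g(1)[OF that] sums_unique2 by blast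
  qed
  have oS: "open S" unfolding S_def by (rule open_Pc)
  have "(g has_derivative (\<lambda>h. \<Sum>i\<in>UNIV. h$i * Gi i x)) (at x)"
    using g(2)[OF xS] at_within_open[OF xS oS] by simp
  then show "((\<lambda>x. \<Sum>\<^sub>\<infinity>\<alpha>. c \<alpha> * mnm a \<alpha> x) has_derivative
          (\<lambda>h. \<Sum>i\<in>UNIV. h$i * (\<Sum>\<^sub>\<infinity>\<alpha>. c \<alpha> * dmono i a \<alpha> x))) (at x)"
    unfolding Gi_def[symmetric]
    by (rule has_derivative_transform_within_open[OF _ oS xS]) (use gG in auto)
qed


lemma has_sum_sum_fin:
  fixes f :: "'i \<Rightarrow> 'a \<Rightarrow> real"
  assumes "finite I" "\<And>i. i \<in> I \<Longrightarrow> (f i has_sum s i) A"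
  shows "((\<lambda>x. \<Sum>i\<in>I. f i x) has_sum (\<Sum>i\<in>I. s i)) A"
  using assms
proof (induction I rule: finite_induct)
  case empty then show ?case by simp
next
  case (insert j I)
  then have "((\<lambda>x. f j x + (\<Sum>i\<in>I. f i x)) has_sum (s j + (\<Sum>i\<in>I. s i))) A"
    by (intro has_sum_add) auto
  then show ?case using insert by simp
qed

lemma dmono_shift:
  fixes a x :: "real^'n" and \<beta> :: "'n \<Rightarrow> nat"
  shows "dmono i a (\<beta>(i := Suc (\<beta> i))) x = real (Suc (\<beta> i)) * mnm a \<beta> x"
proof -
  have "(\<Prod>l\<in>UNIV-{i}. (x$l - a$l) ^ ((\<beta>(i := Suc (\<beta> i))) l)) = (\<Prod>l\<in>UNIV-{i}. (x$l - a$l) ^ \<beta> l)"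
    by (intro prod.cong) auto
  moreover have "mnm a \<beta> x = (x$i - a$i) ^ \<beta> i * (\<Prod>l\<in>UNIV-{i}. (x$l - a$l) ^ \<beta> l)"
    unfolding mnm_def by (simp add: prod.remove)
  ultimately show ?thesis by (simp add: dmono_def)
qed

lemma dmono_has_sum_shift:
  fixes c :: "('n::finite \<Rightarrow> nat) \<Rightarrow> real" and a x :: "real^'n" and i :: 'n
  assumes "((\<lambda>\<alpha>. c \<alpha> * dmono i a \<alpha> x) has_sum S) UNIV"
  shows "((\<lambda>\<beta>. real (Suc (\<beta> i)) * c (\<beta>(i := Suc (\<beta> i))) * mnm a \<beta> x) has_sum S) UNIV"
proof -
  define up where "up \<beta> = \<beta>(i := Suc (\<beta> i))" for \<beta> :: "'n \<Rightarrow> nat"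
  have inj: "inj up"
  proof (rule injI)
    fix \<beta> \<gamma> assume "up \<beta> = up \<gamma>"
    then have "\<forall>l. (up \<beta>) l = (up \<gamma>) l" by simp
    then have "\<forall>l. \<beta> l = \<gamma> l" unfolding up_def by (metis fun_upd_apply nat.inject)
    then show "\<beta> = \<gamma>" by auto
  qed
  have img: "range up = {\<alpha>. \<alpha> i \<noteq> 0}"
  proof (intro set_eqI iffI)
    fix \<alpha> assume "\<alpha> \<in> range up" then show "\<alpha> \<in> {\<alpha>. \<alpha> i \<noteq> 0}" by (auto simp: up_def)
  next
    fix \<alpha> :: "'n \<Rightarrow> nat" assume "\<alpha> \<in> {\<alpha>. \<alpha> i \<noteq> 0}"
    then have "\<alpha> = up (\<alpha>(i := \<alpha> i - 1))" by (auto simp: up_def fun_eq_iff)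
    then show "\<alpha> \<in> range up" by blast
  qed
  have "((\<lambda>\<alpha>. c \<alpha> * dmono i a \<alpha> x) has_sum S) (range up)"
    using assms by (subst has_sum_cong_neutral[where g = "\<lambda>\<alpha>. c \<alpha> * dmono i a \<alpha> x" and T = UNIV])
       (auto simp: img dmono_def)
  then have "(((\<lambda>\<alpha>. c \<alpha> * dmono i a \<alpha> x) \<circ> up) has_sum S) UNIV"
    by (subst (asm) has_sum_reindex[OF inj])
  moreover have "((\<lambda>\<alpha>. c \<alpha> * dmono i a \<alpha> x) \<circ> up) = (\<lambda>\<beta>. real (Suc (\<beta> i)) * c (\<beta>(i := Suc (\<beta> i))) * mnm a \<beta> x)"
    by (auto simp: up_def dmono_shift fun_eq_iff)
  ultimately show ?thesis by simp
qed

lemma powser_smooth: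
  fixes c :: "('n::finite \<Rightarrow> nat) \<Rightarrow> real" and a :: "real^'n"
  assumes "\<And>x. x \<in> Pc a \<rho> \<Longrightarrow> ((\<lambda>\<alpha>. c \<alpha> * mnm a \<alpha> x) has_sum G x) UNIV"
  shows "smooth_on (Pc a \<rho>) G"
proof (rule smooth_on_coind[of "\<lambda>G. \<exists>c. \<forall>x\<in>Pc a \<rho>. ((\<lambda>\<alpha>. c \<alpha> * mnm a \<alpha> x) has_sum G x) UNIV"])
  show "\<exists>c. \<forall>x\<in>Pc a \<rho>. ((\<lambda>\<alpha>. c \<alpha> * mnm a \<alpha> x) has_sum G x) UNIV" using assms by blast
next
  fix G assume "\<exists>c. \<forall>x\<in>Pc a \<rho>. ((\<lambda>\<alpha>. c \<alpha> * mnm a \<alpha> x) has_sum G x) UNIV"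
  then obtain c where c: "\<And>x. x \<in> Pc a \<rho> \<Longrightarrow> ((\<lambda>\<alpha>. c \<alpha> * mnm a \<alpha> x) has_sum G x) UNIV" by blast
  have hs: "\<And>x. x \<in> Pc a \<rho> \<Longrightarrow> (\<lambda>\<alpha>. c \<alpha> * mnm a \<alpha> x) summable_on UNIV"
    using c has_sum_imp_summable by blast
  define Gi where "Gi i x = (\<Sum>\<^sub>\<infinity>\<alpha>. c \<alpha> * dmono i a \<alpha> x)" for i x
  have oP: "open (Pc a \<rho>)" by (rule open_Pc)
  have Gd: "(G has_derivative (\<lambda>h. \<Sum>i\<in>UNIV. h$i * Gi i x)) (at x)" if x: "x \<in> Pc a \<rho>" for x
    unfolding Gi_def
    by (rule has_derivative_transform_within_open[OF powser_has_derivative(2)[OF hs x] oP x])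
       (use c in \<open>auto simp: has_sum_iff\<close>)
  have Gis: "((\<lambda>\<alpha>. c \<alpha> * dmono i a \<alpha> x) has_sum Gi i x) UNIV" if x: "x \<in> Pc a \<rho>" for x i
    unfolding Gi_def using powser_has_derivative(1)[OF hs x] by simp
  show "(\<forall>y\<in>Pc a \<rho>. G differentiable (at y)) \<and>
        (\<forall>u. (\<exists>c. \<forall>x\<in>Pc a \<rho>. ((\<lambda>\<alpha>. c \<alpha> * mnm a \<alpha> x) has_sum dd u G x) UNIV) \<or> smooth_on (Pc a \<rho>) (dd u G))"
  proof (intro conjI allI ballI disjI1)
    show "G differentiable (at y)" if "y \<in> Pc a \<rho>" for y using Gd[OF that] by (auto simp: differentiable_def)
    fix u :: "real^'n"
    show "\<exists>c. \<forall>x\<in>Pc a \<rho>. ((\<lambda>\<alpha>. c \<alpha> * mnm a \<alpha> x) has_sum dd u G x) UNIV"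
    proof (intro exI[of _ "\<lambda>\<beta>. \<Sum>i\<in>UNIV. u$i * (real (Suc (\<beta> i)) * c (\<beta>(i := Suc (\<beta> i))))"] ballI)
      fix x assume x: "x \<in> Pc a \<rho>"
      have "dd u G x = (\<Sum>i\<in>UNIV. u$i * Gi i x)" using dd_has_derivative[OF Gd[OF x]] .
      moreover have "((\<lambda>\<beta>. \<Sum>i\<in>UNIV. u$i * (real (Suc (\<beta> i)) * c (\<beta>(i := Suc (\<beta> i))) * mnm a \<beta> x))
           has_sum (\<Sum>i\<in>UNIV. u$i * Gi i x)) UNIV"
        by (intro has_sum_sum_fin has_sum_cmult_right dmono_has_sum_shift Gis x) simp
      moreover have "(\<lambda>\<beta>. (\<Sum>i\<in>UNIV. u$i * (real (Suc (\<beta> i)) * c (\<beta>(i := Suc (\<beta> i))))) * mnm a \<beta> x)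
          = (\<lambda>\<beta>. \<Sum>i\<in>UNIV. u$i * (real (Suc (\<beta> i)) * c (\<beta>(i := Suc (\<beta> i))) * mnm a \<beta> x))"
        by (simp add: sum_distrib_right mult.assoc)
      ultimately show "((\<lambda>\<beta>. (\<Sum>i\<in>UNIV. u$i * (real (Suc (\<beta> i)) * c (\<beta>(i := Suc (\<beta> i))))) * mnm a \<beta> x) has_sum dd u G x) UNIV"
        by (simp only:)
    qed
  qed
qed


lemma Pc_sub_ball:
  fixes a :: "real^'n"
  assumes "r > 0"
  shows "Pc a (r / real CARD('n)) \<subseteq> ball a r"
proof
  fix x assume x: "x \<in> Pc a (r / real CARD('n))"
  have "dist a x = norm (x - a)" by (simp add: dist_norm norm_minus_commute)
  also have "\<dots> \<le> (\<Sum>i\<in>UNIV. \<bar>(x - a)$i\<bar>)" by (rule norm_le_l1_cart)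
  also have "\<dots> < (\<Sum>i\<in>(UNIV::'n set). r / real CARD('n))"
    using x by (intro sum_strict_mono) (auto simp: Pc_def)
  also have "\<dots> = r" by simp
  finally show "x \<in> ball a r" by simp
qed

lemma analytic_smooth:
  fixes g :: "real^'n \<Rightarrow> real"
  assumes "real_analytic_at g a"
  shows "\<exists>N. open N \<and> a \<in> N \<and> smooth_on N g"
proof -
  obtain r c where r: "r > 0"
    and hs: "\<And>x. x \<in> ball a r \<Longrightarrow> ((\<lambda>\<alpha>. c \<alpha> * (\<Prod>i\<in>UNIV. (x $ i - a $ i) ^ \<alpha> i)) has_sum g x) UNIV"
    using assms unfolding real_analytic_at_def by blast
  define \<rho> where "\<rho> = r / real CARD('n)"
  have "smooth_on (Pc a \<rho>) g"
  proof (rule powser_smooth[of a \<rho> c])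
    fix x assume "x \<in> Pc a \<rho>"
    then have "x \<in> ball a r" using Pc_sub_ball[OF r, of a] by (auto simp: \<rho>_def)
    then show "((\<lambda>\<alpha>. c \<alpha> * mnm a \<alpha> x) has_sum g x) UNIV" using hs by (simp add: mnm_def)
  qed
  moreover have "a \<in> Pc a \<rho>" using r by (auto simp: Pc_def \<rho>_def)
  ultimately show ?thesis using open_Pc by blast
qed

lemma analytic_cube_smooth:
  fixes g :: "real^'n \<Rightarrow> real"
  assumes "\<forall>a\<in>K. real_analytic_at g a"
  shows "\<exists>U. open U \<and> K \<subseteq> U \<and> smooth_on U g"
proof -
  define U where "U = \<Union>{N. open N \<and> smooth_on N g}"
  have "open U" unfolding U_def by auto
  moreover have "K \<subseteq> U" using analytic_smooth assms unfolding U_def by blast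
  moreover have "smooth_on U g"
    by (rule smooth_on_local) (auto simp: U_def)
  ultimately show ?thesis by blast
qed

lemma Phih_smooth:
  fixes g :: "real^'n \<Rightarrow> real"
  assumes U: "smooth_on U g" and T: "invertible_affine T" and S: "open S"
    and inU: "\<And>x. x \<in> S \<Longrightarrow> T x + omega g v \<in> U"
  shows "smooth_on S (Phih g v h T)"
proof -
  obtain A b where A: "linear A" and Tdef: "T = (\<lambda>x. A x + b)"
    using T unfolding invertible_affine_def by blast
  define w where "w = omega g v"
  have l: "linear (\<lambda>x. (v \<bullet> A x) / h)"
    using A by (auto simp: linear_iff inner_add_right add_divide_distrib)
  have eq: "Phih g v h T = (\<lambda>x. (1/h) * g (A x + (b + w)) + (v \<bullet> A x) / h + (v \<bullet> b - g w) / h)"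
    by (auto simp: fun_eq_iff Phih_def Phi_def Tdef w_def inner_add_right add_divide_distrib diff_divide_distrib add.assoc)
  have "smooth_on S (\<lambda>x. (1/h) * g (A x + (b + w)) + (v \<bullet> A x) / h + (v \<bullet> b - g w) / h)"
    by (rule smooth_on_affine[OF U A l S]) (use inU in \<open>auto simp: Tdef w_def add.assoc\<close>)
  then show ?thesis by (simp add: eq)
qed


lemma convex_tangent:
  fixes \<phi> :: "real \<Rightarrow> real"
  assumes cv: "convex_on J \<phi>" and J: "0 \<in> J" "h \<in> J" "h > 0"
    and d: "(\<phi> has_real_derivative p) (at 0)"
  shows "h * p \<le> \<phi> h - \<phi> 0"
proof -
  have lim: "((\<lambda>t. (\<phi> (0 + t) - \<phi> 0) / t) \<longlongrightarrow> p) (at_right 0)"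
    using d unfolding DERIV_def by (rule filterlim_mono) (simp_all add: at_le)
  have ev: "eventually (\<lambda>t. (\<phi> (0 + t) - \<phi> 0) / t \<le> (\<phi> h - \<phi> 0) / h) (at_right 0)"
    using eventually_at_right_real[OF J(3)]
  proof eventually_elim
    case (elim t)
    then have t: "0 < t" "t < h" by auto
    have "(\<phi> 0 - \<phi> t) / (0 - t) \<le> (\<phi> 0 - \<phi> h) / (0 - h)"
      by (rule convex_on_slope_le(1)[OF cv J(1,2) t])
    then show ?case using t by (simp add: divide_simps algebra_simps)
  qed
  have "p \<le> (\<phi> h - \<phi> 0) / h"
    by (rule tendsto_upperbound[OF lim ev]) simp
  then show ?thesis using J(3) by (simp add: field_simps)
qed

lemma convex_second_deriv_nonneg:
  fixes \<phi> \<psi> :: "real \<Rightarrow> real"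
  assumes cv: "convex_on J \<phi>" and oJ: "open J" and J0: "0 \<in> J"
    and d1: "\<And>s. s \<in> J \<Longrightarrow> (\<phi> has_real_derivative \<psi> s) (at s)"
    and d2: "(\<psi> has_real_derivative q) (at 0)"
  shows "q \<ge> 0"
proof (rule ccontr)
  assume "\<not> q \<ge> 0"
  then have q: "q < 0" by simp
  obtain d where d: "d > 0" "\<And>h. h > 0 \<Longrightarrow> h < d \<Longrightarrow> \<psi> (0 + h) < \<psi> 0"
    using DERIV_neg_dec_right[OF d2 q] by blast
  obtain e where e: "e > 0" "ball 0 e \<subseteq> J" using oJ J0 open_contains_ball by blast
  define h where "h = min d e / 2"
  have h: "h > 0" "h < d" "h < e" using d(1) e(1) by (auto simp: h_def)
  have hJ: "{0..h} \<subseteq> J" using e h by (auto simp: dist_real_def)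
  obtain z where z: "0 < z" "z < h" "\<phi> h - \<phi> 0 = (h - 0) * \<psi> z"
    using MVT2[OF h(1), of \<phi> \<psi>] d1 hJ by force
  have "\<psi> z < \<psi> 0" using d(2)[of z] z h by simp
  then have "\<phi> h - \<phi> 0 < h * \<psi> 0" using z h by (simp add: mult_strict_left_mono)
  moreover have "h * \<psi> 0 \<le> \<phi> h - \<phi> 0"
    by (rule convex_tangent[OF cv J0]) (use hJ h d1 J0 in auto)
  ultimately show False by simp
qed

lemma det_psd_nonneg:
  fixes H :: "real^'n^'n"
  assumes psd: "\<And>z. 0 \<le> z \<bullet> (H *v z)"
  shows "det H \<ge> 0"
proof (rule ccontr)
  assume "\<not> det H \<ge> 0"
  then have neg: "det H < 0" by simp
  define q where "q s = det (s *\<^sub>R H + (1 - s) *\<^sub>R mat 1)" for s :: real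
  have cont: "continuous_on UNIV q"
    unfolding q_def det_def by (simp add: mat_def) (intro continuous_intros)
  have q0: "q 0 = 1" by (simp add: q_def)
  have q1: "q 1 = det H" by (simp add: q_def)
  obtain s where s: "0 \<le> s" "s \<le> 1" "q s = 0"
    using IVT2[of q 1 0 0] q0 q1 neg cont by (auto simp: continuous_on_eq_continuous_at)
  have s1: "s < 1" using s q1 neg by (cases "s = 1") auto
  define Ms where "Ms = s *\<^sub>R H + (1 - s) *\<^sub>R mat 1"
  have "det Ms = 0" using s(3) by (simp add: q_def Ms_def)
  then have "\<not> invertible Ms" by (simp add: invertible_det_nz)
  then have "\<not> inj ((*v) Ms)"
    by (simp add: invertible_left_inverse matrix_left_invertible_injective)
  then obtain x y where xy: "x \<noteq> y" "Ms *v x = Ms *v y" by (auto simp: inj_def)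
  define z where "z = x - y"
  have z0: "z \<noteq> 0" using xy by (simp add: z_def)
  have Mz: "Ms *v z = 0" using xy by (simp add: z_def matrix_vector_mult_diff_distrib)
  have "Ms *v z = s *\<^sub>R (H *v z) + (1 - s) *\<^sub>R z"
    by (simp add: Ms_def scaleR_matrix_vector_assoc[symmetric] matrix_vector_mult_add_rdistrib matrix_vector_mul_lid)
  then have "0 = z \<bullet> (s *\<^sub>R (H *v z) + (1 - s) *\<^sub>R z)" using Mz by simp
  also have "\<dots> = s * (z \<bullet> (H *v z)) + (1 - s) * (z \<bullet> z)"
    by (simp add: inner_add_right)
  also have "\<dots> > 0"
  proof -
    have "s * (z \<bullet> (H *v z)) \<ge> 0" using s psd by simp
    moreover have "(1 - s) * (z \<bullet> z) > 0" using s1 z0 by simp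
    ultimately show ?thesis by linarith
  qed
  finally show False by simp
qed


definition P2 :: "(real \<Rightarrow> real) \<Rightarrow> real \<Rightarrow> bool" where
  "P2 f B \<longleftrightarrow> (\<exists>f1 f2. \<forall>t\<in>{-1..1}. (f has_real_derivative f1 t) (at t) \<and>
      (f1 has_real_derivative f2 t) (at t) \<and> \<bar>f t\<bar> \<le> B \<and> \<bar>f1 t\<bar> \<le> B \<and> \<bar>f2 t\<bar> \<le> B)"

lemma P2_nonneg: "P2 f B \<Longrightarrow> B \<ge> 0"
  unfolding P2_def by (metis abs_ge_zero atLeastAtMost_iff neg_le_0_iff_le order_trans zero_less_one_class.zero_le_one)

lemma P2_mono: "P2 f A \<Longrightarrow> A \<le> B \<Longrightarrow> P2 f B"
  unfolding P2_def by (meson order_trans)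

lemma P2_add:
  assumes "P2 f A" "P2 g B"
  shows "P2 (\<lambda>t. f t + g t) (A + B)"
proof -
  obtain f1 f2 where f: "\<forall>t\<in>{-1..1}. (f has_real_derivative f1 t) (at t) \<and>
      (f1 has_real_derivative f2 t) (at t) \<and> \<bar>f t\<bar> \<le> A \<and> \<bar>f1 t\<bar> \<le> A \<and> \<bar>f2 t\<bar> \<le> A"
    using assms(1) unfolding P2_def by blast
  obtain g1 g2 where g: "\<forall>t\<in>{-1..1}. (g has_real_derivative g1 t) (at t) \<and>
      (g1 has_real_derivative g2 t) (at t) \<and> \<bar>g t\<bar> \<le> B \<and> \<bar>g1 t\<bar> \<le> B \<and> \<bar>g2 t\<bar> \<le> B"
    using assms(2) unfolding P2_def by blast
  show ?thesis unfolding P2_def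
  proof (rule exI[of _ "\<lambda>t. f1 t + g1 t"], rule exI[of _ "\<lambda>t. f2 t + g2 t"], intro ballI conjI)
    fix t :: real assume t: "t \<in> {-1..1}"
    show "((\<lambda>t. f t + g t) has_real_derivative f1 t + g1 t) (at t)"
      using f g t by (auto intro!: derivative_eq_intros)
    show "((\<lambda>t. f1 t + g1 t) has_real_derivative f2 t + g2 t) (at t)"
      using f g t by (auto intro!: derivative_eq_intros)
    show "\<bar>f t + g t\<bar> \<le> A + B" using f g t by (meson abs_triangle_ineq add_mono order_trans)
    show "\<bar>f1 t + g1 t\<bar> \<le> A + B" using f g t by (meson abs_triangle_ineq add_mono order_trans)
    show "\<bar>f2 t + g2 t\<bar> \<le> A + B" using f g t by (meson abs_triangle_ineq add_mono order_trans)
  qed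
qed

lemma P2_cmult:
  assumes "P2 f A"
  shows "P2 (\<lambda>t. c * f t) (\<bar>c\<bar> * A)"
proof -
  obtain f1 f2 where f: "\<forall>t\<in>{-1..1}. (f has_real_derivative f1 t) (at t) \<and>
      (f1 has_real_derivative f2 t) (at t) \<and> \<bar>f t\<bar> \<le> A \<and> \<bar>f1 t\<bar> \<le> A \<and> \<bar>f2 t\<bar> \<le> A"
    using assms(1) unfolding P2_def by blast
  show ?thesis unfolding P2_def
  proof (rule exI[of _ "\<lambda>t. c * f1 t"], rule exI[of _ "\<lambda>t. c * f2 t"], intro ballI conjI)
    fix t :: real assume t: "t \<in> {-1..1}"
    show "((\<lambda>t. c * f t) has_real_derivative c * f1 t) (at t)"
      using f t by (auto intro!: derivative_eq_intros)
    show "((\<lambda>t. c * f1 t) has_real_derivative c * f2 t) (at t)"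
      using f t by (auto intro!: derivative_eq_intros)
    show "\<bar>c * f t\<bar> \<le> \<bar>c\<bar> * A" using f t by (simp add: abs_mult mult_left_mono)
    show "\<bar>c * f1 t\<bar> \<le> \<bar>c\<bar> * A" using f t by (simp add: abs_mult mult_left_mono)
    show "\<bar>c * f2 t\<bar> \<le> \<bar>c\<bar> * A" using f t by (simp add: abs_mult mult_left_mono)
  qed
qed

lemma P2_mult:
  assumes "P2 f A" "P2 g B"
  shows "P2 (\<lambda>t. f t * g t) (4 * A * B)"
proof -
  have A0: "A \<ge> 0" and B0: "B \<ge> 0" using assms P2_nonneg by auto
  obtain f1 f2 where f: "\<forall>t\<in>{-1..1}. (f has_real_derivative f1 t) (at t) \<and>
      (f1 has_real_derivative f2 t) (at t) \<and> \<bar>f t\<bar> \<le> A \<and> \<bar>f1 t\<bar> \<le> A \<and> \<bar>f2 t\<bar> \<le> A"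
    using assms(1) unfolding P2_def by blast
  obtain g1 g2 where g: "\<forall>t\<in>{-1..1}. (g has_real_derivative g1 t) (at t) \<and>
      (g1 has_real_derivative g2 t) (at t) \<and> \<bar>g t\<bar> \<le> B \<and> \<bar>g1 t\<bar> \<le> B \<and> \<bar>g2 t\<bar> \<le> B"
    using assms(2) unfolding P2_def by blast
  show ?thesis unfolding P2_def
  proof (rule exI[of _ "\<lambda>t. f1 t * g t + f t * g1 t"],
      rule exI[of _ "\<lambda>t. f2 t * g t + f1 t * g1 t + (f1 t * g1 t + f t * g2 t)"], intro ballI conjI)
    fix t :: real assume t: "t \<in> {-1..1}"
    have ft: "(f has_real_derivative f1 t) (at t)" "(f1 has_real_derivative f2 t) (at t)"
      "\<bar>f t\<bar> \<le> A" "\<bar>f1 t\<bar> \<le> A" "\<bar>f2 t\<bar> \<le> A" using f t by auto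
    have gt: "(g has_real_derivative g1 t) (at t)" "(g1 has_real_derivative g2 t) (at t)"
      "\<bar>g t\<bar> \<le> B" "\<bar>g1 t\<bar> \<le> B" "\<bar>g2 t\<bar> \<le> B" using g t by auto
    show "((\<lambda>t. f t * g t) has_real_derivative f1 t * g t + f t * g1 t) (at t)"
      using ft gt by (auto intro!: derivative_eq_intros)
    show "((\<lambda>t. f1 t * g t + f t * g1 t) has_real_derivative
        f2 t * g t + f1 t * g1 t + (f1 t * g1 t + f t * g2 t)) (at t)"
      using ft gt by (auto intro!: derivative_eq_intros)
    have m: "\<bar>u * w\<bar> \<le> A * B" if "\<bar>u\<bar> \<le> A" "\<bar>w\<bar> \<le> B" for u w
      using that A0 B0 by (simp add: abs_mult mult_mono)
    have AB: "A * B \<ge> 0" using A0 B0 by simp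
    show "\<bar>f t * g t\<bar> \<le> 4 * A * B" using m[OF ft(3) gt(3)] AB by linarith
    show "\<bar>f1 t * g t + f t * g1 t\<bar> \<le> 4 * A * B"
      using m[OF ft(4) gt(3)] m[OF ft(3) gt(4)] AB abs_triangle_ineq[of "f1 t * g t" "f t * g1 t"] by linarith
    show "\<bar>f2 t * g t + f1 t * g1 t + (f1 t * g1 t + f t * g2 t)\<bar> \<le> 4 * A * B"
      using m[OF ft(5) gt(3)] m[OF ft(4) gt(4)] m[OF ft(3) gt(5)] AB
        abs_triangle_ineq[of "f2 t * g t + f1 t * g1 t" "f1 t * g1 t + f t * g2 t"]
        abs_triangle_ineq[of "f2 t * g t" "f1 t * g1 t"]
        abs_triangle_ineq[of "f1 t * g1 t" "f t * g2 t"] by linarith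
  qed
qed

lemma P2_const1: "P2 (\<lambda>t. 1) 1"
  unfolding P2_def by (rule exI[of _ "\<lambda>t. 0"], rule exI[of _ "\<lambda>t. 0"]) (auto intro!: derivative_eq_intros)

lemma P2_sum:
  assumes "finite I" "\<And>i. i \<in> I \<Longrightarrow> P2 (f i) (B i)"
  shows "P2 (\<lambda>t. \<Sum>i\<in>I. f i t) (\<Sum>i\<in>I. B i)"
  using assms
proof (induction I rule: finite_induct)
  case empty
  have "P2 (\<lambda>t. 0 * 1) (\<bar>0\<bar> * 1)" by (rule P2_cmult[OF P2_const1])
  then show ?case by simp
next
  case (insert j I)
  have "P2 (\<lambda>t. f j t + (\<Sum>i\<in>I. f i t)) (B j + (\<Sum>i\<in>I. B i))"
    using insert by (intro P2_add) auto
  then show ?case using insert by simp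
qed

lemma P2_prod:
  assumes "finite I" "\<And>i. i \<in> I \<Longrightarrow> P2 (f i) M" "M \<ge> 0"
  shows "P2 (\<lambda>t. \<Prod>i\<in>I. f i t) ((4 * M) ^ card I)"
  using assms
proof (induction I rule: finite_induct)
  case empty
  then show ?case using P2_const1 by simp
next
  case (insert j I)
  have "P2 (\<lambda>t. f j t * (\<Prod>i\<in>I. f i t)) (4 * M * (4 * M) ^ card I)"
    using insert by (intro P2_mult) auto
  then show ?case using insert by (simp add: mult_ac)
qed

lemma P2_det:
  fixes E :: "real \<Rightarrow> real^'n^'n"
  assumes "\<And>i k. P2 (\<lambda>t. E t $ i $ k) M" "M \<ge> 0"
  shows "P2 (\<lambda>t. det (E t)) (real (card {p. p permutes (UNIV::'n set)}) * (4 * M) ^ CARD('n))"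
proof -
  have "P2 (\<lambda>t. \<Sum>p\<in>{p. p permutes (UNIV::'n set)}. of_int (sign p) * (\<Prod>i\<in>UNIV. E t $ i $ p i))
     (\<Sum>p\<in>{p. p permutes (UNIV::'n set)}. (4 * M) ^ CARD('n))"
  proof (rule P2_sum)
    show "finite {p. p permutes (UNIV::'n set)}" by (rule finite_permutations) simp
    fix p assume "p \<in> {p. p permutes (UNIV::'n set)}"
    have "P2 (\<lambda>t. of_int (sign p) * (\<Prod>i\<in>UNIV. E t $ i $ p i)) (\<bar>of_int (sign p)\<bar> * (4 * M) ^ card (UNIV::'n set))"
      by (intro P2_cmult P2_prod assms) auto
    moreover have "\<bar>real_of_int (sign p)\<bar> = 1" by (simp add: sign_def)
    ultimately show "P2 (\<lambda>t. of_int (sign p) * (\<Prod>i\<in>UNIV. E t $ i $ p i)) ((4 * M) ^ CARD('n))"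
      by (simp only: mult_1)
  qed
  then show ?thesis by (simp add: det_def)
qed

lemma oneD:
  fixes f f1 f2 :: "real \<Rightarrow> real"
  assumes nn: "\<And>t. t \<in> {-1..1} \<Longrightarrow> f t \<ge> 0"
    and d: "\<And>t. t \<in> {-1..1} \<Longrightarrow> (f has_real_derivative f1 t) (at t) \<and> (f1 has_real_derivative f2 t) (at t)
         \<and> \<bar>f1 t\<bar> \<le> B \<and> \<bar>f2 t\<bar> \<le> B"
  shows "(f1 0)\<^sup>2 \<le> 2 * B * f 0"
proof (cases "f1 0 = 0")
  case True
  have "B \<ge> 0" using d[of 0] by auto
  then show ?thesis using True nn[of 0] by simp
next
  case False
  define a where "a = \<bar>f1 0\<bar>"
  have a: "a > 0" "a \<le> B" using False d[of 0] by (auto simp: a_def)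
  then have B: "B > 0" by simp
  define t where "t = - sgn (f1 0) * a / B"
  have t1: "\<bar>t\<bar> \<le> 1" using a B by (simp add: t_def abs_mult abs_sgn_eq False)
  have tne: "t \<noteq> 0" using a B False by (simp add: t_def sgn_if)
  have ft: "f1 0 * t = - a\<^sup>2 / B"
    using False by (simp add: t_def a_def sgn_if power2_eq_square)
  have tt: "t\<^sup>2 = a\<^sup>2 / B\<^sup>2" using False by (simp add: t_def power_mult_distrib power_divide sgn_if)
  define diff where "diff m = (if m = 0 then f else if m = 1 then f1 else f2)" for m :: nat
  obtain \<xi> where \<xi>: "(if t < 0 then t < \<xi> \<and> \<xi> < 0 else 0 < \<xi> \<and> \<xi> < t)"
    "f t = (\<Sum>m<2. diff m 0 / fact m * (t - 0) ^ m) + diff 2 \<xi> / fact 2 * (t - 0) ^ 2"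
  proof (atomize_elim, rule Taylor[of 2 diff f "-1" 1 0 t])
    show "0 < (2::nat)" by simp
    show "diff 0 = f" by (simp add: diff_def)
    show "\<forall>m t. m < 2 \<and> -1 \<le> t \<and> t \<le> 1 \<longrightarrow> (diff m has_real_derivative diff (Suc m) t) (at t)"
      using d by (auto simp: diff_def less_2_cases_iff)
  qed (use t1 tne in auto)
  have xi: "\<xi> \<in> {-1..1}" using \<xi>(1) t1 by (auto split: if_splits)
  have ftx: "f t = f 0 + f1 0 * t + f2 \<xi> / 2 * t\<^sup>2"
    using \<xi>(2) by (simp add: diff_def numeral_2_eq_2)
  have "f2 \<xi> / 2 * t\<^sup>2 \<le> B / 2 * t\<^sup>2"
    using d[OF xi] by (intro mult_right_mono) auto
  moreover have "f t \<ge> 0" using nn[of t] t1 by (auto simp: abs_le_iff)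
  moreover have "B / 2 * t\<^sup>2 = B / 2 * (a\<^sup>2 / B\<^sup>2)" using tt by simp
  ultimately have "0 \<le> f 0 - a\<^sup>2 / B + B / 2 * (a\<^sup>2 / B\<^sup>2)" using ftx ft by linarith
  also have "B / 2 * (a\<^sup>2 / B\<^sup>2) = a\<^sup>2 / (2 * B)" using B by (simp add: power2_eq_square field_simps)
  finally have "a\<^sup>2 / (2 * B) \<le> f 0" using B by (simp add: field_simps)
  then have "a\<^sup>2 \<le> 2 * B * f 0" using B by (simp add: field_simps)
  then show ?thesis by (simp add: a_def)
qed


lemma partial_eq_dd: "partial i f = dd (axis i 1) f"
  by (simp add: fun_eq_iff partial_def dd_def)

lemma iter_partial_smooth: "smooth_on S F \<Longrightarrow> smooth_on S (iter_partial is F)"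
  by (induction "is") (auto simp: partial_eq_dd intro: smooth_on_dd)

lemma dd_sum_partial:
  fixes f :: "real^'n \<Rightarrow> real"
  assumes "smooth_on S f" "y \<in> S"
  shows "dd u f y = (\<Sum>i\<in>UNIV. u$i * partial i f y)"
proof -
  have L: "linear (\<lambda>u. dd u f y)" by (rule smooth_on_linear_dd[OF assms])
  have "u = (\<Sum>i\<in>UNIV. u$i *\<^sub>R axis i 1)"
    using basis_expansion[of u] by (simp add: scalar_mult_eq_scaleR)
  then have "dd u f y = dd (\<Sum>i\<in>UNIV. u$i *\<^sub>R axis i 1) f y" by simp
  also have "\<dots> = (\<Sum>i\<in>UNIV. dd (u$i *\<^sub>R axis i 1) f y)"
    using linear_sum[OF L, of "\<lambda>i. u$i *\<^sub>R axis i 1" UNIV] by (simp add: o_def)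
  also have "\<dots> = (\<Sum>i\<in>UNIV. u$i * dd (axis i 1) f y)"
    using linear_scale[OF L] by simp
  finally show ?thesis by (simp add: partial_eq_dd)
qed

lemma hess_psd:
  fixes F :: "real^'n \<Rightarrow> real"
  assumes Fs: "smooth_on S F" and oS: "open S" and cv: "convex_on S F" and y: "y \<in> S"
  shows "det (\<chi> i k. partial i (partial k F) y) \<ge> 0"
proof (rule det_psd_nonneg)
  fix z :: "real^'n"
  define H where "H = (\<chi> i k. partial i (partial k F) y)"
  define J where "J = {s::real. y + s *\<^sub>R z \<in> S}"
  have "continuous_on UNIV (\<lambda>s::real. y + s *\<^sub>R z)" by (intro continuous_intros)
  from open_vimage[OF oS this] have oJ: "open J" unfolding J_def by (simp add: vimage_def)
  have J0: "0 \<in> J" using y by (simp add: J_def)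
  have cS: "convex S" using cv convex_on_imp_convex by blast
  have aff: "y + (u * s1 + v * s2) *\<^sub>R z = u *\<^sub>R (y + s1 *\<^sub>R z) + v *\<^sub>R (y + s2 *\<^sub>R z)"
    if "u + v = 1" for u v s1 s2 :: real
  proof -
    have "y = u *\<^sub>R y + v *\<^sub>R y" using that by (metis scaleR_add_left scaleR_one)
    then show ?thesis by (simp add: algebra_simps)
  qed
  have cvJ: "convex_on J (\<lambda>s. F (y + s *\<^sub>R z))"
    unfolding convex_on_def
  proof (intro conjI ballI allI impI)
    show "convex J" unfolding convex_def J_def
    proof (intro ballI allI impI, simp)
      fix s1 s2 u v :: real assume "y + s1 *\<^sub>R z \<in> S" "y + s2 *\<^sub>R z \<in> S" "0 \<le> u" "0 \<le> v" "u + v = 1"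
      then show "y + (u * s1 + v * s2) *\<^sub>R z \<in> S" using aff cS unfolding convex_def by metis
    qed
    fix s1 s2 u v :: real assume s: "s1 \<in> J" "s2 \<in> J" "0 \<le> u" "0 \<le> v" "u + v = 1"
    have "F (y + (u *\<^sub>R s1 + v *\<^sub>R s2) *\<^sub>R z) = F (u *\<^sub>R (y + s1 *\<^sub>R z) + v *\<^sub>R (y + s2 *\<^sub>R z))"
      using aff[OF s(5)] by simp
    also have "\<dots> \<le> u * F (y + s1 *\<^sub>R z) + v * F (y + s2 *\<^sub>R z)"
      using cv s unfolding convex_on_def J_def by blast
    finally show "F (y + (u *\<^sub>R s1 + v *\<^sub>R s2) *\<^sub>R z) \<le> u * F (y + s1 *\<^sub>R z) + v * F (y + s2 *\<^sub>R z)" .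
  qed
  have d1: "((\<lambda>s. F (y + s *\<^sub>R z)) has_real_derivative (\<Sum>k\<in>UNIV. z$k * partial k F (y + s *\<^sub>R z))) (at s)"
    if "s \<in> J" for s
  proof -
    have "y + s *\<^sub>R z \<in> S" using that by (simp add: J_def)
    from smooth_on_line[OF Fs this] dd_sum_partial[OF Fs this] show ?thesis by simp
  qed
  have d2: "((\<lambda>s. \<Sum>k\<in>UNIV. z$k * partial k F (y + s *\<^sub>R z)) has_real_derivative
      (\<Sum>k\<in>UNIV. z$k * (\<Sum>i\<in>UNIV. z$i * partial i (partial k F) y))) (at 0)"
  proof (intro DERIV_sum DERIV_cmult)
    fix k
    have Pk: "smooth_on S (partial k F)" using iter_partial_smooth[OF Fs, of "[k]"] by simp
    have "y + 0 *\<^sub>R z \<in> S" using y by simp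
    from smooth_on_line[OF Pk this] dd_sum_partial[OF Pk y]
    show "((\<lambda>s. partial k F (y + s *\<^sub>R z)) has_real_derivative (\<Sum>i\<in>UNIV. z$i * partial i (partial k F) y)) (at 0)"
      by simp
  qed
  have q: "0 \<le> (\<Sum>k\<in>UNIV. z$k * (\<Sum>i\<in>UNIV. z$i * partial i (partial k F) y))"
    by (rule convex_second_deriv_nonneg[OF cvJ oJ J0 d1 d2])
  have "z \<bullet> (H *v z) = (\<Sum>i\<in>UNIV. z$i * (\<Sum>k\<in>UNIV. partial i (partial k F) y * z$k))"
    by (simp add: H_def inner_vec_def matrix_vector_mult_def)
  also have "\<dots> = (\<Sum>i\<in>UNIV. \<Sum>k\<in>UNIV. z$i * partial i (partial k F) y * z$k)"
    by (simp add: sum_distrib_left mult.assoc)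
  also have "\<dots> = (\<Sum>k\<in>UNIV. \<Sum>i\<in>UNIV. z$i * partial i (partial k F) y * z$k)"
    by (rule sum.swap)
  also have "\<dots> = (\<Sum>k\<in>UNIV. z$k * (\<Sum>i\<in>UNIV. z$i * partial i (partial k F) y))"
    by (simp add: sum_distrib_left mult_ac)
  finally show "0 \<le> z \<bullet> ((\<chi> i k. partial i (partial k F) y) *v z)" using q by (simp add: H_def)
qed


theorem lemma4p6:
  fixes g :: "real^'n \<Rightarrow> real" and k :: nat and m M c h0 R :: real
    and T :: "real^'n \<Rightarrow> real \<Rightarrow> real^'n \<Rightarrow> real^'n" and j :: 'n
  assumes dim: "2 \<le> CARD('n)" "CARD('n) \<le> 4"
    and analytic: "\<forall>a\<in>cube 2. real_analytic_at g a"
    and convex: "convex_on (cube 2) g"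
    and ftype: "finite_type_on (cube 1) g k m M"
    and c_phi: "c > 0"
      "\<forall>v. admissible g v \<longrightarrow> (\<forall>x\<in>ball 0 (1/2). (c * norm x) ^ k \<le> Phi g v x)"
    and h0: "0 < h0" "h0 \<le> (c / 4) ^ k"
    and T: "\<forall>v h. admissible g v \<and> 0 < h \<and> h < h0 \<longrightarrow>
              invertible_affine (T v h) \<and>
              ball 0 1 \<subseteq> (T v h) -` sublevel g v h \<and>
              (T v h) -` sublevel g v h \<subseteq> ball 0 (real CARD('n))"
    and R: "R \<ge> 100 * real CARD('n)"
    and standing: "\<exists>k' m' M'. \<forall>v h. admissible g v \<and> 0 < h \<and> h < h0 \<longrightarrow>
              (\<forall>x\<in>ball 0 R. T v h x + omega g v \<in> cube 2) \<and>
              convex_on (ball 0 R) (Phih g v h (T v h)) \<and>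
              finite_type_on (ball 0 R) (Phih g v h (T v h)) k' m' M'"
  shows "\<exists>C. \<forall>v h. admissible g v \<and> 0 < h \<and> h < h0 \<longrightarrow>
           (\<forall>x\<in>ball 0 (R - 1).
              (partial j (hessdet (Phih g v h (T v h))) x) ^ 2
                \<le> C * hessdet (Phih g v h (T v h)) x)"
proof -
  obtain k' m' M' where st: "\<And>v h. admissible g v \<Longrightarrow> 0 < h \<Longrightarrow> h < h0 \<Longrightarrow>
              (\<forall>x\<in>ball 0 R. T v h x + omega g v \<in> cube 2) \<and>
              convex_on (ball 0 R) (Phih g v h (T v h)) \<and>
              finite_type_on (ball 0 R) (Phih g v h (T v h)) k' m' M'"
    using standing by blast
  obtain U where U: "open U" "cube 2 \<subseteq> U" "smooth_on U g"
    using analytic_cube_smooth[OF analytic] by blast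
  define Bd where "Bd = real (card {p. p permutes (UNIV::'n set)}) * (4 * M') ^ CARD('n)"
  show ?thesis
  proof (intro exI[of _ "2 * Bd"] allI impI ballI)
    fix v h x assume vh: "admissible g v \<and> 0 < h \<and> h < h0" and x: "x \<in> ball (0::real^'n) (R - 1)"
    define F where "F = Phih g v h (T v h)"
    have st': "(\<forall>x\<in>ball 0 R. T v h x + omega g v \<in> cube 2)" "convex_on (ball 0 R) F"
       "finite_type_on (ball 0 R) F k' m' M'"
      using st[of v h] vh by (auto simp: F_def)
    have k2: "2 \<le> k'" and M0: "M' > 0"
      and bnd: "\<And>y is. y \<in> ball 0 R \<Longrightarrow> length is \<le> 2 * k' + 5 \<Longrightarrow> \<bar>iter_partial is F y\<bar> \<le> M'"
      using st'(3) unfolding finite_type_on_def by auto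
    have Fs: "smooth_on (ball 0 R) F"
      unfolding F_def
      by (rule Phih_smooth[OF U(3)]) (use T vh st'(1) U(2) in auto)
    define l where "l t = x + t *\<^sub>R axis j (1::real)" for t :: real
    have lball: "l t \<in> ball 0 R" if "t \<in> {-1..1}" for t
    proof -
      have "norm (l t) \<le> norm x + norm (t *\<^sub>R axis j (1::real))" unfolding l_def by (rule norm_triangle_ineq)
      also have "norm (t *\<^sub>R axis j (1::real)) = \<bar>t\<bar>" by simp
      finally show ?thesis using x that by (auto simp: abs_le_iff)
    qed
    define E where "E t = (\<chi> i k. partial i (partial k F) (l t))" for t
    have Ent: "E t $ i $ k = iter_partial [i, k] F (l t)" for t i k by (simp add: E_def)
    have lineD: "((\<lambda>s. iter_partial is F (l s)) has_real_derivative iter_partial (j # is) F (l t)) (at t)"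
      if "t \<in> {-1..1}" for t "is"
    proof -
      have "((\<lambda>s. iter_partial is F (x + s *\<^sub>R axis j 1)) has_real_derivative
          dd (axis j 1) (iter_partial is F) (x + t *\<^sub>R axis j 1)) (at t)"
        by (rule smooth_on_line[OF iter_partial_smooth[OF Fs]]) (use lball[OF that] in \<open>simp add: l_def\<close>)
      then show ?thesis by (simp add: l_def partial_eq_dd)
    qed
    have P2E: "P2 (\<lambda>t. E t $ i $ k) M'" for i k
      unfolding P2_def Ent
    proof (rule exI[of _ "\<lambda>t. iter_partial [j, i, k] F (l t)"],
        rule exI[of _ "\<lambda>t. iter_partial [j, j, i, k] F (l t)"], intro ballI conjI)
      fix t :: real assume t: "t \<in> {-1..1}"
      show "((\<lambda>t. iter_partial [i, k] F (l t)) has_real_derivative iter_partial [j, i, k] F (l t)) (at t)"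
        using lineD[OF t, of "[i,k]"] by simp
      show "((\<lambda>t. iter_partial [j, i, k] F (l t)) has_real_derivative iter_partial [j, j, i, k] F (l t)) (at t)"
        using lineD[OF t, of "[j,i,k]"] by simp
      show "\<bar>iter_partial [i, k] F (l t)\<bar> \<le> M'" using bnd[OF lball[OF t], of "[i, k]"] k2 by simp
      show "\<bar>iter_partial [j, i, k] F (l t)\<bar> \<le> M'" using bnd[OF lball[OF t], of "[j, i, k]"] k2 by simp
      show "\<bar>iter_partial [j, j, i, k] F (l t)\<bar> \<le> M'" using bnd[OF lball[OF t], of "[j, j, i, k]"] k2 by simp
    qed
    have "P2 (\<lambda>t. det (E t)) Bd"
      unfolding Bd_def by (rule P2_det[OF P2E]) (use M0 in simp)
    then obtain D1 D2 where D: "\<And>t. t \<in> {-1..1} \<Longrightarrow> ((\<lambda>t. det (E t)) has_real_derivative D1 t) (at t) \<and>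
      (D1 has_real_derivative D2 t) (at t) \<and> \<bar>det (E t)\<bar> \<le> Bd \<and> \<bar>D1 t\<bar> \<le> Bd \<and> \<bar>D2 t\<bar> \<le> Bd"
      unfolding P2_def by blast
    have nonneg: "det (\<chi> i k. partial i (partial k F) y) \<ge> 0" if "y \<in> ball 0 R" for y
      by (rule hess_psd[OF Fs open_ball st'(2) that])
    have Enn: "det (E t) \<ge> 0" if "t \<in> {-1..1}" for t
      unfolding E_def using nonneg[OF lball[OF that]] .
    have "open ((\<lambda>t. x + t *\<^sub>R axis j (1::real)) -` ball 0 R)"
      by (rule open_vimage[OF open_ball]) (intro continuous_intros)
    moreover have "0 \<in> (\<lambda>t. x + t *\<^sub>R axis j (1::real)) -` ball 0 R"
      using lball[of 0] by (simp add: l_def)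
    ultimately have ev: "eventually (\<lambda>t. x + t *\<^sub>R axis j (1::real) \<in> ball 0 R) (nhds 0)"
      using eventually_nhds_in_open by fastforce
    have "partial j (hessdet F) x = deriv (\<lambda>t. det (E t)) 0"
      unfolding partial_def
    proof (rule deriv_cong_ev)
      show "\<forall>\<^sub>F t in nhds 0. hessdet F (x + t *\<^sub>R axis j 1) = det (E t)"
        using ev
      proof eventually_elim
        case (elim t)
        then show ?case using nonneg[OF elim] by (simp add: hessdet_def E_def l_def)
      qed
    qed simp
    also have "\<dots> = D1 0" using D[of 0] by (auto intro: DERIV_imp_deriv)
    finally have pj: "partial j (hessdet F) x = D1 0" .
    have hx: "hessdet F x = det (E 0)"
      using nonneg[OF lball[of 0]] by (simp add: hessdet_def E_def l_def)
    have "(D1 0)\<^sup>2 \<le> 2 * Bd * det (E 0)"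
      by (rule oneD[of "\<lambda>t. det (E t)" D1 D2 Bd]) (use Enn D in auto)
    then show "(partial j (hessdet (Phih g v h (T v h))) x) ^ 2 \<le> 2 * Bd * hessdet (Phih g v h (T v h)) x"
      using pj hx by (simp add: F_def)
  qed
qed


end
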